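(* Let $k\ge2^{10}$ and let $s$ be a positive integer. Let $\Phi$ be an $n\times N$ complex matrix whose columns $\mathbf u_1,\dots,\mathbf u_N$ satisfy $\|\mathbf u_j\|_2=1$, and assume its coherence parameter satisfies $\mu\le1/k$. Assume also that for some $\delta\ge0$ and any disjoint $J_1,J_2\subset\{1,\dots,N\}$ with $|J_1|\le k$, $|J_2|\le k$ we have $$\left|\left\langle\sum_{j\in J_1}\mathbf u_j,\sum_{j\in J_2}\mathbf u_j\right\rangle\right|\le\delta k.$$ Then $\Phi$ satisfies the Restricted Isometry Property of order $2sk$ with constant $44s\sqrt{\delta}\log k$.
   Context: The coherence is $\mu=\max_{r\ne s}|\langle\mathbf u_r,\mathbf u_s\rangle|$. A vector $\mathbf x\in\mathbb C^N$ is $K$-sparse if it has at most $K$ nonzero coordinates; $\Phi$ satisfies RIP of order $K$ with constant $\delta'$ if $(1-\delta')\|\mathbf x\|_2^2\le\|\Phi\mathbf x\|_2^2\le(1+\delta')\|\mathbf x\|_2^2$ for all $K$-sparse $\mathbf x$. *)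

theory Defs
  imports "HOL-Analysis.Analysis"
begin

text \<open>Vectors in C^n are represented as functions nat => complex, only coordinates
  i < n being relevant. The matrix Phi (n x N) is given by its columns u j, j in {1..N}.\<close>

definition cinner :: "nat \<Rightarrow> (nat \<Rightarrow> complex) \<Rightarrow> (nat \<Rightarrow> complex) \<Rightarrow> complex" where
  "cinner n x y = (\<Sum>i<n. x i * cnj (y i))"

definition cnorm2 :: "nat \<Rightarrow> (nat \<Rightarrow> complex) \<Rightarrow> real" where
  "cnorm2 n x = sqrt (\<Sum>i<n. (cmod (x i))\<^sup>2)"

definition coherence :: "nat \<Rightarrow> nat \<Rightarrow> (nat \<Rightarrow> nat \<Rightarrow> complex) \<Rightarrow> real" where
  "coherence n N u = Max ({cmod (cinner n (u r) (u s)) | r s. r \<in> {1..N} \<and> s \<in> {1..N} \<and> r \<noteq> s} \<union> {0})"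

definition matvec :: "nat \<Rightarrow> (nat \<Rightarrow> nat \<Rightarrow> complex) \<Rightarrow> (nat \<Rightarrow> complex) \<Rightarrow> (nat \<Rightarrow> complex)" where
  "matvec N u x = (\<lambda>i. \<Sum>j\<in>{1..N}. x j * u j i)"

definition sparse :: "nat \<Rightarrow> nat \<Rightarrow> (nat \<Rightarrow> complex) \<Rightarrow> bool" where
  "sparse N K x \<longleftrightarrow> card {j \<in> {1..N}. x j \<noteq> 0} \<le> K"

definition RIP :: "nat \<Rightarrow> nat \<Rightarrow> (nat \<Rightarrow> nat \<Rightarrow> complex) \<Rightarrow> nat \<Rightarrow> real \<Rightarrow> bool" where
  "RIP n N u K d \<longleftrightarrow> (\<forall>x. sparse N K x \<longrightarrow>
     (1 - d) * (cnorm2 N (\<lambda>j. x (j + 1)))\<^sup>2 \<le> (cnorm2 n (matvec N u x))\<^sup>2 \<and>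
     (cnorm2 n (matvec N u x))\<^sup>2 \<le> (1 + d) * (cnorm2 N (\<lambda>j. x (j + 1)))\<^sup>2)"

end

theory Submission
  imports Defs
begin

lemma geo_up: "(\<Sum>m\<le>c. (2::real)^m) = 2^(Suc c) - 1"
  by (induction c) auto

lemma geo_down_eq: "c \<le> K \<Longrightarrow> (\<Sum>m\<in>{c<..K}. (1/2::real)^m) = (1/2)^c - (1/2)^K"
proof (induction K)
  case 0 then show ?case by simp
next
  case (Suc K)
  show ?case
  proof (cases "c = Suc K")
    case True then show ?thesis by simp
  next
    case False
    then have "c \<le> K" using Suc.prems by simp
    then have "{c<..Suc K} = insert (Suc K) {c<..K}" by auto
    then show ?thesis using Suc.IH[OF \<open>c \<le> K\<close>] by simp
  qed
qed

lemma geo_down: "finite M \<Longrightarrow> (\<Sum>m\<in>{m\<in>M. c < m}. (1/2::real)^m) \<le> (1/2)^c"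
proof -
  assume f: "finite M"
  define K where "K = Max (insert c M)"
  have sub: "{m\<in>M. c < m} \<subseteq> {c<..K}" using f by (auto simp: K_def)
  have "c \<le> K" using f by (simp add: K_def)
  have "(\<Sum>m\<in>{m\<in>M. c < m}. (1/2::real)^m) \<le> (\<Sum>m\<in>{c<..K}. (1/2::real)^m)"
    by (rule sum_mono2) (use sub in auto)
  also have "\<dots> \<le> (1/2)^c" using geo_down_eq[OF \<open>c \<le> K\<close>] by simp
  finally show ?thesis .
qed

lemma geo_low: "finite M \<Longrightarrow> (\<Sum>m\<in>{m\<in>M. m \<le> c}. (2::real)^m) \<le> 2 * 2^c"
proof -
  assume f: "finite M"
  have "(\<Sum>m\<in>{m\<in>M. m \<le> c}. (2::real)^m) \<le> (\<Sum>m\<le>c. (2::real)^m)"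
    by (rule sum_mono2) auto
  also have "\<dots> \<le> 2 * 2^c" using geo_up[of c] by simp
  finally show ?thesis .
qed

lemma geo_all: "finite M \<Longrightarrow> (\<Sum>m\<in>M. (1/2::real)^m) \<le> 2"
proof -
  assume f: "finite M"
  have "(\<Sum>m\<in>M. (1/2::real)^m) = (\<Sum>m\<in>{m\<in>M. 0 < m}. (1/2::real)^m) + (\<Sum>m\<in>{m\<in>M. m = 0}. (1/2::real)^m)"
    using f by (subst sum.union_disjoint[symmetric]) (auto intro: sum.cong)
  also have "(\<Sum>m\<in>{m\<in>M. m = 0}. (1/2::real)^m) \<le> 1"
  proof -
    have "{m\<in>M. m = 0} \<subseteq> {0}" by auto
    then have "(\<Sum>m\<in>{m\<in>M. m = 0}. (1/2::real)^m) \<le> (\<Sum>m\<in>{0}. (1/2::real)^m)"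
      by (intro sum_mono2) auto
    then show ?thesis by simp
  qed
  finally show ?thesis using geo_down[OF f, of 0] by simp
qed

lemma geo_sum:
  fixes X Y :: real and M :: "nat set"
  assumes X: "X \<ge> 0" and Y: "Y > 0" and f: "finite M"
  shows "(\<Sum>m\<in>M. min (X / 2^m) (Y * 2^m)) \<le> 3 * sqrt (X*Y)"
proof (cases "X < Y")
  case True
  have Xs: "X \<le> sqrt (X*Y)"
  proof -
    have "X * X \<le> X * Y" using True X by (intro mult_left_mono) auto
    then have "sqrt (X*X) \<le> sqrt (X*Y)" by (rule real_sqrt_le_mono)
    then show ?thesis using X by simp
  qed
  have "(\<Sum>m\<in>M. min (X / 2^m) (Y * 2^m)) \<le> (\<Sum>m\<in>M. X * (1/2)^m)"
    by (rule sum_mono) (simp add: power_one_over)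
  also have "\<dots> = X * (\<Sum>m\<in>M. (1/2)^m)" by (simp add: sum_distrib_left)
  also have "\<dots> \<le> X * 2" using geo_all[OF f] X by (intro mult_left_mono) auto
  finally have "(\<Sum>m\<in>M. min (X / 2^m) (Y * 2^m)) \<le> X * 2" .
  moreover have "0 \<le> sqrt (X*Y)" using X Y by simp
  ultimately show ?thesis using Xs by linarith
next
  case False
  then have XY: "X / Y \<ge> 1" using Y by simp
  obtain c0 where c0: "X / Y < 4 ^ c0" using real_arch_pow[of 4 "X/Y"] by auto
  have "(4::real) ^ c0 \<le> 4 ^ Suc c0" by (rule power_increasing) auto
  with c0 have c0': "X / Y < 4 ^ Suc c0" by linarith
  define c where "c = (LEAST c. X / Y < 4 ^ Suc c)"
  have c1: "X / Y < 4 ^ Suc c" unfolding c_def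
    by (rule LeastI[of _ c0]) (use c0' in auto)
  have c2: "4 ^ c \<le> X / Y"
  proof (cases c)
    case 0 then show ?thesis using XY by simp
  next
    case (Suc c')
    have "\<not> X / Y < 4 ^ Suc c'"
    proof
      assume "X / Y < 4 ^ Suc c'"
      then have "c \<le> c'" unfolding c_def by (rule Least_le)
      then show False using Suc by simp
    qed
    then show ?thesis using Suc by simp
  qed
  define x :: real where "x = 2^c"
  have xpos: "x > 0" by (simp add: x_def)
  have x2: "x^2 = 4^c" unfolding x_def by (metis power_mult_distrib power2_eq_square power_even_eq mult_2 numeral_Bit0 power_mult mult.commute power2_eq_square)
  define y where "y = sqrt (X/Y)"
  have XY0: "0 \<le> X / Y" using X Y by (simp add: divide_nonneg_pos)
  have y0: "y \<ge> 0" using XY0 by (simp add: y_def)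
  have y2: "y^2 = X/Y" using XY0 unfolding y_def by simp
  have ylo: "x \<le> y"
  proof -
    have "x^2 \<le> y^2" using c2 x2 y2 by simp
    then show ?thesis using y0 by (rule power2_le_imp_le)
  qed
  have yhi: "y \<le> 2 * x"
  proof -
    have "y^2 \<le> (2*x)^2" using c1 x2 y2 by (simp add: power_mult_distrib)
    moreover have "0 \<le> 2 * x" using xpos by simp
    ultimately show ?thesis by (rule power2_le_imp_le)
  qed
  have split: "(\<Sum>m\<in>M. min (X / 2^m) (Y * 2^m)) =
      (\<Sum>m\<in>{m\<in>M. m \<le> c}. min (X / 2^m) (Y * 2^m)) + (\<Sum>m\<in>{m\<in>M. c < m}. min (X / 2^m) (Y * 2^m))"
    using f by (subst sum.union_disjoint[symmetric]) (auto intro: sum.cong)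
  have l: "(\<Sum>m\<in>{m\<in>M. m \<le> c}. min (X / 2^m) (Y * 2^m)) \<le> Y * (2 * x)"
  proof -
    have "(\<Sum>m\<in>{m\<in>M. m \<le> c}. min (X / 2^m) (Y * 2^m)) \<le> (\<Sum>m\<in>{m\<in>M. m \<le> c}. Y * 2^m)"
      by (rule sum_mono) simp
    also have "\<dots> = Y * (\<Sum>m\<in>{m\<in>M. m \<le> c}. 2^m)" by (simp add: sum_distrib_left)
    also have "\<dots> \<le> Y * (2 * x)" using geo_low[OF f, of c] Y by (simp add: x_def)
    finally show ?thesis .
  qed
  have h: "(\<Sum>m\<in>{m\<in>M. c < m}. min (X / 2^m) (Y * 2^m)) \<le> X / x"
  proof -
    have "(\<Sum>m\<in>{m\<in>M. c < m}. min (X / 2^m) (Y * 2^m)) \<le> (\<Sum>m\<in>{m\<in>M. c < m}. X * (1/2)^m)"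
      by (rule sum_mono) (simp add: power_one_over)
    also have "\<dots> = X * (\<Sum>m\<in>{m\<in>M. c < m}. (1/2)^m)" by (simp add: sum_distrib_left)
    also have "\<dots> \<le> X * (1/2)^c" using geo_down[OF f, of c] X by (intro mult_left_mono) auto
    also have "\<dots> = X / x" by (simp add: x_def power_one_over)
    finally show ?thesis .
  qed
  have key: "Y * (2 * x) + X / x \<le> 3 * sqrt (X*Y)"
  proof -
    have XYe: "X = Y * y^2" using y2 Y by simp
    have sq: "sqrt (X*Y) = Y * y"
    proof -
      have "X * Y = (Y*y)^2" using XYe by (simp add: power2_eq_square)
      then show ?thesis using Y y0 by simp
    qed
    have "(2*x - y) * (x - y) \<le> 0" using ylo yhi by (intro mult_nonneg_nonpos) auto
    then have "2*x*x + y*y \<le> 3 * x * y" by (simp add: algebra_simps)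
    then have "2*x + y^2/x \<le> 3 * y" using xpos by (simp add: field_simps power2_eq_square)
    then have "Y * (2*x + y^2/x) \<le> Y * (3*y)" using Y by (intro mult_left_mono) auto
    then show ?thesis using XYe sq by (simp add: algebra_simps)
  qed
  show ?thesis using split l h key by linarith
qed

lemma vertex:
  fixes w :: "nat \<Rightarrow> real" and f :: "nat \<Rightarrow> complex"
  assumes fin: "finite A" and w: "\<And>r. r \<in> A \<Longrightarrow> 0 \<le> w r \<and> w r \<le> \<theta>" and th: "0 \<le> \<theta>"
  shows "\<exists>A' \<subseteq> {r\<in>A. w r \<noteq> 0}. cmod (\<Sum>r\<in>A. of_real (w r) * f r) \<le> \<theta> * cmod (\<Sum>r\<in>A'. f r)"
proof (cases "(\<Sum>r\<in>A. of_real (w r) * f r) = 0")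
  case True
  show ?thesis by (rule exI[of _ "{}"]) (simp add: True)
next
  case False
  define Z where "Z = (\<Sum>r\<in>A. of_real (w r) * f r)"
  have Z0: "Z \<noteq> 0" using False by (simp add: Z_def)
  define \<omega> where "\<omega> = cnj Z / of_real (cmod Z)"
  have om1: "cmod \<omega> = 1" using Z0 by (simp add: \<omega>_def norm_divide)
  have "\<omega> * Z = of_real (cmod Z)"
  proof -
    have "cnj Z * Z = of_real ((cmod Z)^2)" by (metis complex_norm_square mult.commute)
    then show ?thesis using Z0 by (simp add: \<omega>_def power2_eq_square field_simps)
  qed
  then have ReZ: "cmod Z = Re (\<omega> * Z)" by simp
  define g where "g r = w r * Re (\<omega> * f r)" for r
  have ReZ2: "Re (\<omega> * Z) = (\<Sum>r\<in>A. g r)"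
    by (simp add: Z_def g_def sum_distrib_left mult.left_commute algebra_simps)
  define A' where "A' = {r\<in>A. w r \<noteq> 0 \<and> 0 < Re (\<omega> * f r)}"
  have A'sub: "A' \<subseteq> {r\<in>A. w r \<noteq> 0}" by (auto simp: A'_def)
  have finA': "finite A'" using fin by (auto simp: A'_def)
  have "(\<Sum>r\<in>A. g r) = (\<Sum>r\<in>A'. g r) + (\<Sum>r\<in>A - A'. g r)"
    using fin A'sub by (subst sum.subset_diff[of A' A]) auto
  also have "(\<Sum>r\<in>A - A'. g r) \<le> 0"
  proof (rule sum_nonpos)
    fix r assume "r \<in> A - A'"
    then have "r \<in> A" "w r = 0 \<or> Re (\<omega> * f r) \<le> 0" by (auto simp: A'_def)
    then show "g r \<le> 0" using w[of r] by (auto simp: g_def mult_nonneg_nonpos)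
  qed
  also have "(\<Sum>r\<in>A'. g r) \<le> (\<Sum>r\<in>A'. \<theta> * Re (\<omega> * f r))"
  proof (rule sum_mono)
    fix r assume "r \<in> A'"
    then have "r \<in> A" "0 < Re (\<omega> * f r)" by (auto simp: A'_def)
    then show "g r \<le> \<theta> * Re (\<omega> * f r)" using w[of r] by (auto simp: g_def intro: mult_right_mono)
  qed
  also have "(\<Sum>r\<in>A'. \<theta> * Re (\<omega> * f r)) = \<theta> * Re (\<omega> * (\<Sum>r\<in>A'. f r))"
    by (simp add: sum_distrib_left)
  also have "\<dots> \<le> \<theta> * cmod (\<omega> * (\<Sum>r\<in>A'. f r))"
    using th by (intro mult_left_mono complex_Re_le_cmod) auto
  also have "\<dots> = \<theta> * cmod (\<Sum>r\<in>A'. f r)" using om1 by (simp add: norm_mult)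
  finally have "cmod Z \<le> \<theta> * cmod (\<Sum>r\<in>A'. f r)" using ReZ ReZ2 by simp
  then show ?thesis using A'sub Z_def by blast
qed

locale ctx =
  fixes n N k :: nat and u :: "nat \<Rightarrow> nat \<Rightarrow> complex" and \<delta> :: real
  assumes kge: "k \<ge> 2 ^ 10"
    and unit: "\<forall>j\<in>{1..N}. cnorm2 n (u j) = 1"
    and coh: "coherence n N u \<le> 1 / real k"
    and dge: "\<delta> \<ge> 0"
    and hyp: "\<forall>J1 J2. J1 \<subseteq> {1..N} \<longrightarrow> J2 \<subseteq> {1..N} \<longrightarrow> J1 \<inter> J2 = {} \<longrightarrow>
           card J1 \<le> k \<longrightarrow> card J2 \<le> k \<longrightarrow>
           cmod (cinner n (\<lambda>i. \<Sum>j\<in>J1. u j i) (\<lambda>i. \<Sum>j\<in>J2. u j i)) \<le> \<delta> * real k"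
begin

definition G where "G r s = cinner n (u r) (u s)"

lemma kpos: "real k > 0" using kge by simp

lemma bil:
  assumes "finite A" "finite B"
  shows "cinner n (\<lambda>i. \<Sum>r\<in>A. a r * u r i) (\<lambda>i. \<Sum>s\<in>B. b s * u s i)
     = (\<Sum>r\<in>A. \<Sum>s\<in>B. a r * cnj (b s) * G r s)"
proof -
  have "cinner n (\<lambda>i. \<Sum>r\<in>A. a r * u r i) (\<lambda>i. \<Sum>s\<in>B. b s * u s i)
      = (\<Sum>i<n. \<Sum>r\<in>A. \<Sum>s\<in>B. a r * cnj (b s) * (u r i * cnj (u s i)))"
    unfolding cinner_def by (simp add: sum_distrib_left sum_distrib_right mult_ac) (intro sum.cong refl sum.swap)
  also have "\<dots> = (\<Sum>r\<in>A. \<Sum>i<n. \<Sum>s\<in>B. a r * cnj (b s) * (u r i * cnj (u s i)))"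
    by (rule sum.swap)
  also have "\<dots> = (\<Sum>r\<in>A. \<Sum>s\<in>B. \<Sum>i<n. a r * cnj (b s) * (u r i * cnj (u s i)))"
    by (rule sum.cong[OF refl], rule sum.swap)
  also have "\<dots> = (\<Sum>r\<in>A. \<Sum>s\<in>B. a r * cnj (b s) * G r s)"
    unfolding G_def cinner_def by (simp add: sum_distrib_left)
  finally show ?thesis .
qed

lemma bil1:
  assumes "finite A" "finite B"
  shows "cinner n (\<lambda>i. \<Sum>r\<in>A. u r i) (\<lambda>i. \<Sum>s\<in>B. u s i) = (\<Sum>r\<in>A. \<Sum>s\<in>B. G r s)"
  using bil[OF assms, of "\<lambda>_. 1" "\<lambda>_. 1"] by simp

lemma G_diag: "r \<in> {1..N} \<Longrightarrow> G r r = 1"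
proof -
  assume r: "r \<in> {1..N}"
  have "G r r = (\<Sum>i<n. of_real ((cmod (u r i))^2))"
    unfolding G_def cinner_def by (simp add: complex_norm_square[symmetric])
  also have "\<dots> = of_real (\<Sum>i<n. (cmod (u r i))^2)" by simp
  also have "\<dots> = of_real ((cnorm2 n (u r))^2)" unfolding cnorm2_def by (simp add: sum_nonneg)
  also have "\<dots> = 1" using unit r by simp
  finally show ?thesis .
qed

lemma G_coh: "r \<in> {1..N} \<Longrightarrow> s \<in> {1..N} \<Longrightarrow> r \<noteq> s \<Longrightarrow> cmod (G r s) \<le> 1 / real k"
proof -
  assume rs: "r \<in> {1..N}" "s \<in> {1..N}" "r \<noteq> s"
  let ?S = "{cmod (cinner n (u r) (u s)) | r s. r \<in> {1..N} \<and> s \<in> {1..N} \<and> r \<noteq> s} \<union> {0}"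
  have "?S \<subseteq> (\<lambda>(r,s). cmod (cinner n (u r) (u s))) ` ({1..N} \<times> {1..N}) \<union> {0}" by auto
  then have fin: "finite ?S" by (rule finite_subset) auto
  have "cmod (G r s) \<in> ?S" using rs unfolding G_def by blast
  then have "cmod (G r s) \<le> Max ?S" using fin by (rule Max_ge[rotated])
  also have "Max ?S = coherence n N u" unfolding coherence_def by simp
  finally show ?thesis using coh by simp
qed

lemma setbound:
  assumes "A \<subseteq> {1..N}" "B \<subseteq> {1..N}" "A \<inter> B = {}" "card A \<le> k" "card B \<le> k"
  shows "cmod (\<Sum>r\<in>A. \<Sum>s\<in>B. G r s) \<le> min (\<delta> * real k) (real (card A) * real (card B) / real k)"
proof -
  have fA: "finite A" "finite B" using assms(1,2) by (auto intro: finite_subset)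
  have 1: "cmod (\<Sum>r\<in>A. \<Sum>s\<in>B. G r s) \<le> \<delta> * real k"
    using hyp assms bil1[OF fA] by metis
  have "cmod (\<Sum>r\<in>A. \<Sum>s\<in>B. G r s) \<le> (\<Sum>r\<in>A. \<Sum>s\<in>B. cmod (G r s))"
    by (rule order_trans[OF norm_sum sum_mono]) (rule norm_sum)
  also have "\<dots> \<le> (\<Sum>r\<in>A. \<Sum>s\<in>B. 1 / real k)"
    by (intro sum_mono G_coh) (use assms in auto)
  also have "\<dots> = real (card A) * real (card B) / real k" by simp
  finally show ?thesis using 1 by simp
qed

end

lemma sq_le_sum:
  fixes y :: "nat \<Rightarrow> real"
  assumes "finite A" "r \<in> A"
  shows "(y r)^2 \<le> (\<Sum>r\<in>A. (y r)^2)"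
  using assms by (intro member_le_sum) auto

lemma four_pow: "(2::real)^(p*2) = 4^p"
proof -
  have "(2::real)^(2*p) = (2^2)^p" by (rule power_mult)
  then show ?thesis by (simp add: mult.commute)
qed

lemma layers:
  fixes y :: "nat \<Rightarrow> real" and A :: "nat set" and lam :: real and P K :: nat
  assumes fin: "finite A" and ypos: "\<And>r. r \<in> A \<Longrightarrow> 0 \<le> y r"
    and lam: "lam = sqrt (\<Sum>r\<in>A. (y r)^2)" and lpos: "lam > 0"
    and cA: "card A \<le> K" and KP: "K \<le> 4^P"
  defines "L \<equiv> \<lambda>p r. if p < P then min (y r) (lam/2^p) - min (y r) (lam/2^Suc p) else min (y r) (lam/2^P)"
  shows "\<And>r. r \<in> A \<Longrightarrow> y r = (\<Sum>p\<le>P. L p r)"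
    and "\<And>p r. r \<in> A \<Longrightarrow> 0 \<le> L p r \<and> L p r \<le> lam / 2^(min (Suc p) P)"
    and "\<And>p. p \<le> P \<Longrightarrow> real (card {r\<in>A. L p r \<noteq> 0}) \<le> 4^(min (Suc p) P)"
proof -
  have ylam: "y r \<le> lam" if "r \<in> A" for r
    unfolding lam by (rule real_le_rsqrt) (rule sq_le_sum[OF fin that])
  show "y r = (\<Sum>p\<le>P. L p r)" if r: "r \<in> A" for r
  proof -
    define g where "g p = min (y r) (lam/2^p)" for p :: nat
    have "(\<Sum>p\<le>P. L p r) = (\<Sum>p<P. L p r) + L P r"
      by (simp add: lessThan_Suc_atMost[symmetric])
    also have "(\<Sum>p<P. L p r) = (\<Sum>p<P. g p - g (Suc p))"
      by (rule sum.cong) (auto simp: L_def g_def)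
    also have "\<dots> = g 0 - g P" by (rule sum_lessThan_telescope')
    also have "L P r = g P" by (simp add: L_def g_def)
    also have "g 0 = y r" using ylam[OF r] by (simp add: g_def)
    finally show ?thesis by simp
  qed
  show "0 \<le> L p r \<and> L p r \<le> lam / 2^(min (Suc p) P)" if r: "r \<in> A" for p r
  proof (cases "p < P")
    case True
    have "lam/2^Suc p \<le> lam/2^p" using lpos by (intro divide_left_mono) auto
    moreover have "lam/2^p - lam/2^Suc p = lam/2^Suc p" by (simp add: field_simps)
    ultimately show ?thesis using True ypos[OF r] lpos by (auto simp: L_def min_def)
  next
    case False
    then show ?thesis using ypos[OF r] lpos by (auto simp: L_def min_def)
  qed
  show "real (card {r\<in>A. L p r \<noteq> 0}) \<le> 4^(min (Suc p) P)" if p: "p \<le> P" for p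
  proof (cases "p < P")
    case False
    then have "p = P" using p by simp
    have "card {r\<in>A. L p r \<noteq> 0} \<le> card A" using fin by (intro card_mono) auto
    then have "card {r\<in>A. L p r \<noteq> 0} \<le> 4^P" using cA KP by linarith
    then have "real (card {r\<in>A. L p r \<noteq> 0}) \<le> real (4^P)" by (simp only: of_nat_le_iff)
    then have "real (card {r\<in>A. L p r \<noteq> 0}) \<le> 4^P" by simp
    then show ?thesis using \<open>p = P\<close> by simp
  next
    case True
    define c where "c = lam/2^Suc p"
    have cpos: "c > 0" using lpos by (simp add: c_def)
    define S where "S = {r\<in>A. L p r \<noteq> 0}"
    have finS: "finite S" using fin by (simp add: S_def)
    have Sbig: "c < y r" if "r \<in> S" for r
    proof (rule ccontr)
      assume "\<not> c < y r"
      then have "y r \<le> c" by simp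
      moreover have "c \<le> lam/2^p" using lpos by (simp add: c_def divide_left_mono)
      ultimately have "L p r = 0" using True by (simp add: L_def c_def min_def)
      then show False using that by (simp add: S_def)
    qed
    have "real (card S) * c^2 = (\<Sum>r\<in>S. c^2)" by simp
    also have "\<dots> \<le> (\<Sum>r\<in>S. (y r)^2)"
      using Sbig cpos by (intro sum_mono power_mono) (auto intro: less_imp_le)
    also have "\<dots> \<le> (\<Sum>r\<in>A. (y r)^2)" using fin by (intro sum_mono2) (auto simp: S_def)
    also have "\<dots> = lam^2" using lam by (simp add: sum_nonneg)
    also have "lam^2 = 4^(Suc p) * c^2" by (simp add: c_def field_simps power_mult_distrib power2_eq_square[symmetric] power_even_eq[symmetric] four_pow)
    finally have "real (card S) \<le> 4^Suc p" using cpos by simp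
    then show ?thesis using True by (simp add: S_def)
  qed
qed

context ctx begin

lemma vertex2:
  assumes AB: "A \<subseteq> {1..N}" "B \<subseteq> {1..N}" "A \<inter> B = {}" "card A \<le> k" "card B \<le> k"
    and l: "\<And>r. r \<in> A \<Longrightarrow> 0 \<le> lw r \<and> lw r \<le> \<theta>"
    and m: "\<And>s. s \<in> B \<Longrightarrow> 0 \<le> m s \<and> m s \<le> \<eta>"
    and th: "0 \<le> \<theta>" and et: "0 \<le> \<eta>"
  shows "cmod (\<Sum>r\<in>A. \<Sum>s\<in>B. of_real (lw r) * of_real (m s) * G r s)
     \<le> \<theta> * \<eta> * min (\<delta> * real k) (real (card {r\<in>A. lw r \<noteq> 0}) * real (card {s\<in>B. m s \<noteq> 0}) / real k)"
proof -
  have fA: "finite A" "finite B" using AB(1,2) by (auto intro: finite_subset)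
  define f where "f r = (\<Sum>s\<in>B. of_real (m s) * G r s)" for r
  have eq1: "(\<Sum>r\<in>A. \<Sum>s\<in>B. of_real (lw r) * of_real (m s) * G r s) = (\<Sum>r\<in>A. of_real (lw r) * f r)"
    by (simp add: f_def sum_distrib_left mult.assoc)
  obtain A' where A': "A' \<subseteq> {r\<in>A. lw r \<noteq> 0}"
    and b1: "cmod (\<Sum>r\<in>A. of_real (lw r) * f r) \<le> \<theta> * cmod (\<Sum>r\<in>A'. f r)"
    using vertex[of A lw \<theta> f] fA(1) l th by blast
  have fA': "finite A'" using A' fA by (auto intro: finite_subset)
  define g where "g s = (\<Sum>r\<in>A'. G r s)" for s
  have eq2: "(\<Sum>r\<in>A'. f r) = (\<Sum>s\<in>B. of_real (m s) * g s)"
    unfolding f_def g_def by (simp add: sum_distrib_left) (rule sum.swap)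
  obtain B' where B': "B' \<subseteq> {s\<in>B. m s \<noteq> 0}"
    and b2: "cmod (\<Sum>s\<in>B. of_real (m s) * g s) \<le> \<eta> * cmod (\<Sum>s\<in>B'. g s)"
    using vertex[of B m \<eta> g] fA(2) m et by blast
  have fB': "finite B'" using B' fA by (auto intro: finite_subset)
  have eq3: "(\<Sum>s\<in>B'. g s) = (\<Sum>r\<in>A'. \<Sum>s\<in>B'. G r s)"
    unfolding g_def by (rule sum.swap)
  have cA: "card A' \<le> card {r\<in>A. lw r \<noteq> 0}" using A' fA by (intro card_mono) auto
  have cB: "card B' \<le> card {s\<in>B. m s \<noteq> 0}" using B' fA by (intro card_mono) auto
  have cA2: "card A' \<le> k" using cA card_mono[OF fA(1), of "{r\<in>A. lw r \<noteq> 0}"] AB by auto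
  have cB2: "card B' \<le> k" using cB card_mono[OF fA(2), of "{s\<in>B. m s \<noteq> 0}"] AB by auto
  have b3: "cmod (\<Sum>r\<in>A'. \<Sum>s\<in>B'. G r s) \<le> min (\<delta> * real k) (real (card A') * real (card B') / real k)"
    by (rule setbound) (use A' B' AB cA2 cB2 in auto)
  also have "\<dots> \<le> min (\<delta> * real k) (real (card {r\<in>A. lw r \<noteq> 0}) * real (card {s\<in>B. m s \<noteq> 0}) / real k)"
    using cA cB kpos by (intro min.mono order_refl divide_right_mono mult_mono) auto
  finally have b4: "cmod (\<Sum>r\<in>A'. \<Sum>s\<in>B'. G r s) \<le> min (\<delta> * real k) (real (card {r\<in>A. lw r \<noteq> 0}) * real (card {s\<in>B. m s \<noteq> 0}) / real k)" .
  have "cmod (\<Sum>r\<in>A. \<Sum>s\<in>B. of_real (lw r) * of_real (m s) * G r s) \<le> \<theta> * (\<eta> * cmod (\<Sum>s\<in>B'. g s))"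
    using b1 b2 eq1 eq2 th by (metis (no_types, lifting) mult_left_mono order_trans)
  also have "\<dots> \<le> \<theta> * (\<eta> * min (\<delta> * real k) (real (card {r\<in>A. lw r \<noteq> 0}) * real (card {s\<in>B. m s \<noteq> 0}) / real k))"
    using b4 eq3 th et by (intro mult_left_mono) auto
  finally show ?thesis by (simp add: mult.assoc)
qed

end

lemma hbound:
  fixes lam kap al be D K :: real
  assumes "lam \<ge> 0" "kap \<ge> 0" "al \<ge> 0" "be \<ge> 0" "al \<le> 4^a" "be \<le> 4^b" "D \<ge> 0" "K > 0"
  shows "(lam/2^a) * (kap/2^b) * min D (al*be/K) \<le> lam * kap * min (D/2^(a+b)) (1/K * 2^(a+b))"
proof -
  have c: "(1::real)/2^(a+b) > 0" by simp
  have e1: "(lam/2^a) * (kap/2^b) * min D (al*be/K) = lam * kap * (1/2^(a+b) * min D (al*be/K))"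
    by (simp add: power_add field_simps)
  have "1/2^(a+b) * min D (al*be/K) = min (1/2^(a+b) * D) (1/2^(a+b) * (al*be/K))"
    using c by (subst min_mult_distrib_left) auto
  also have "\<dots> = min (D/2^(a+b)) (al*be/K/2^(a+b))" by (simp add: mult.commute)
  also have "\<dots> \<le> min (D/2^(a+b)) (1/K * 2^(a+b))"
  proof (rule min.mono[OF order_refl])
    have "al*be \<le> 4^a * 4^b" using assms by (intro mult_mono) auto
    also have "(4::real)^a * 4^b = 2^(a+b) * 2^(a+b)"
      by (simp add: four_pow[symmetric] power_add[symmetric] algebra_simps)
    finally have "al*be \<le> 2^(a+b) * 2^(a+b)" .
    then have "al*be/K/2^(a+b) \<le> 2^(a+b) * 2^(a+b)/K/2^(a+b)"
      using assms by (intro divide_right_mono) auto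
    also have "\<dots> = 1/K * 2^(a+b)" by simp
    finally show "al*be/K/2^(a+b) \<le> 1/K * 2^(a+b)" .
  qed
  finally have 5: "1/2^(a+b) * min D (al*be/K) \<le> min (D/2^(a+b)) (1/K * 2^(a+b))" .
  have "0 \<le> lam * kap" using assms by simp
  from mult_left_mono[OF 5 this] show ?thesis unfolding e1 .
qed

context ctx begin

definition P where "P = (LEAST P. k \<le> 4^P)"

lemma P_k: "k \<le> 4^P"
proof -
  have "k < 2^k" by (rule less_exp)
  also have "(2::nat)^k \<le> 4^k" by (rule power_mono) auto
  finally have "k < 4^k" .
  then have "k \<le> 4^k" by (rule less_imp_le)
  then show ?thesis unfolding P_def by (rule LeastI[of "\<lambda>P. k \<le> 4^P" k])
qed

lemma P_ge: "P \<ge> 5"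
proof (rule ccontr)
  assume "\<not> P \<ge> 5"
  then have "P \<le> 4" by simp
  then have "(4::nat)^P \<le> 4^4" by (intro power_increasing) auto
  moreover have "(4::nat)^4 < 2^10" by simp
  ultimately show False using P_k kge by linarith
qed

lemma P_lt: "4^(P-1) < k"
proof (rule ccontr)
  assume "\<not> 4^(P-1) < k"
  then have "k \<le> 4^(P-1)" by simp
  then have "P \<le> P - 1" unfolding P_def by (rule Least_le)
  then show False using P_ge by simp
qed

definition H where "H m = min (\<delta> * real k / 2^m) (1 / real k * 2^m)"

lemma H_sum: "finite M \<Longrightarrow> (\<Sum>m\<in>M. H m) \<le> 3 * sqrt \<delta>"
proof -
  assume f: "finite M"
  have "(\<Sum>m\<in>M. H m) \<le> 3 * sqrt (\<delta> * real k * (1 / real k))"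
    unfolding H_def by (rule geo_sum[OF _ _ f]) (use dge kpos in auto)
  then show ?thesis using kpos by simp
qed

lemma min_le_sqrt: "(a::real) \<ge> 0 \<Longrightarrow> b \<ge> 0 \<Longrightarrow> min a b \<le> sqrt (a*b)"
proof -
  assume ab: "a \<ge> 0" "b \<ge> 0"
  have "min a b * min a b \<le> a * b" using ab by (intro mult_mono) auto
  then have "sqrt (min a b * min a b) \<le> sqrt (a*b)" by (rule real_sqrt_le_mono)
  then show ?thesis using ab by simp
qed

lemma H_one: "H m \<le> sqrt \<delta>"
proof -
  have "H m \<le> sqrt (\<delta> * real k / 2^m * (1 / real k * 2^m))"
    unfolding H_def by (rule min_le_sqrt) (use dge kpos in auto)
  then show ?thesis using kpos by simp
qed

lemma H_shift: "(\<Sum>q<Q. H (c + q)) \<le> 3 * sqrt \<delta>"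
proof -
  have "(\<Sum>q<Q. H (c + q)) = (\<Sum>m\<in>(\<lambda>q. c + q) ` {..<Q}. H m)"
    by (subst sum.reindex) (auto simp: inj_on_def)
  also have "\<dots> \<le> 3 * sqrt \<delta>" by (rule H_sum) simp
  finally show ?thesis .
qed

lemma num: "(\<Sum>p\<le>P. \<Sum>q\<le>P. H (min (Suc p) P + min (Suc q) P)) \<le> (3 * real P + 7) * sqrt \<delta>"
proof -
  define e where "e p = min (Suc p) P" for p
  have sp: "(\<Sum>p\<le>P. F p) = F P + (\<Sum>p<P. F p)" for F :: "nat \<Rightarrow> real"
    by (simp add: lessThan_Suc_atMost[symmetric])
  have eP: "e P = P" by (simp add: e_def)
  have elt: "p < P \<Longrightarrow> e p = Suc p" for p by (simp add: e_def)
  have row: "(\<Sum>q\<le>P. H (a + e q)) = H (a + P) + (\<Sum>q<P. H (Suc a + q))" for a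
    by (subst sp) (auto intro!: sum.cong simp: eP elt)
  have "(\<Sum>p\<le>P. \<Sum>q\<le>P. H (e p + e q)) = (\<Sum>q\<le>P. H (P + e q)) + (\<Sum>p<P. \<Sum>q\<le>P. H (Suc p + e q))"
    by (subst sp) (auto intro!: sum.cong simp: eP elt)
  also have "(\<Sum>q\<le>P. H (P + e q)) \<le> 4 * sqrt \<delta>"
    using row[of P] H_one[of "P + P"] H_shift[of "Suc P" P] by simp
  also have "(\<Sum>p<P. \<Sum>q\<le>P. H (Suc p + e q)) = (\<Sum>p<P. H (Suc p + P) + (\<Sum>q<P. H (Suc (Suc p) + q)))"
    by (rule sum.cong[OF refl]) (rule row)
  also have "\<dots> = (\<Sum>p<P. H (Suc p + P)) + (\<Sum>p<P. \<Sum>q<P. H (Suc (Suc p) + q))"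
    by (rule sum.distrib)
  also have "(\<Sum>p<P. H (Suc p + P)) \<le> 3 * sqrt \<delta>"
    using H_shift[of "Suc P" P] by (simp add: add.commute)
  also have "(\<Sum>p<P. \<Sum>q<P. H (Suc (Suc p) + q)) \<le> (\<Sum>p<P. 3 * sqrt \<delta>)"
    by (intro sum_mono H_shift)
  finally have 1: "(\<Sum>p\<le>P. \<Sum>q\<le>P. H (e p + e q)) \<le> 4 * sqrt \<delta> + (3 * sqrt \<delta> + (\<Sum>p<P. 3 * sqrt \<delta>))"
    by simp
  have 2: "(\<Sum>p<P. 3 * sqrt \<delta>) = 3 * real P * sqrt \<delta>" by simp
  have 3: "(\<Sum>p\<le>P. \<Sum>q\<le>P. H (min (Suc p) P + min (Suc q) P)) = (\<Sum>p\<le>P. \<Sum>q\<le>P. H (e p + e q))"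
    by (simp add: e_def)
  have 4: "(3 * real P + 7) * sqrt \<delta> = 7 * sqrt \<delta> + 3 * real P * sqrt \<delta>" by (simp add: algebra_simps)
  show ?thesis using 1 2 3 4 by linarith
qed

end

context ctx begin

lemma sq_zero:
  fixes y :: "nat \<Rightarrow> real"
  assumes "finite A" "sqrt (\<Sum>r\<in>A. (y r)^2) = 0" "r \<in> A"
  shows "y r = 0"
proof -
  have "(\<Sum>r\<in>A. (y r)^2) = 0" using assms(2) by simp
  then have "\<forall>r\<in>A. (y r)^2 = 0" using assms(1) by (subst (asm) sum_nonneg_eq_0_iff) auto
  then show ?thesis using assms(3) by simp
qed

lemma core:
  assumes AB: "A \<subseteq> {1..N}" "B \<subseteq> {1..N}" "A \<inter> B = {}" "card A \<le> k" "card B \<le> k"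
    and y: "\<And>r. r \<in> A \<Longrightarrow> 0 \<le> y r" and w: "\<And>s. s \<in> B \<Longrightarrow> 0 \<le> w s"
  shows "cmod (\<Sum>r\<in>A. \<Sum>s\<in>B. of_real (y r) * of_real (w s) * G r s)
     \<le> (3 * real P + 7) * sqrt \<delta> * (sqrt (\<Sum>r\<in>A. (y r)^2) * sqrt (\<Sum>s\<in>B. (w s)^2))"
proof -
  have fA: "finite A" "finite B" using AB(1,2) by (auto intro: finite_subset)
  define lam where "lam = sqrt (\<Sum>r\<in>A. (y r)^2)"
  define kap where "kap = sqrt (\<Sum>s\<in>B. (w s)^2)"
  have R0: "0 \<le> (3 * real P + 7) * sqrt \<delta> * (lam * kap)" using dge by (simp add: lam_def kap_def sum_nonneg)
  show ?thesis
  proof (cases "lam = 0 \<or> kap = 0")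
    case True
    then have "(\<Sum>r\<in>A. \<Sum>s\<in>B. of_real (y r) * of_real (w s) * G r s) = 0"
    proof
      assume "lam = 0"
      then have "\<And>r. r \<in> A \<Longrightarrow> y r = 0" using sq_zero[OF fA(1)] by (simp add: lam_def)
      then show ?thesis by simp
    next
      assume "kap = 0"
      then have "\<And>s. s \<in> B \<Longrightarrow> w s = 0" using sq_zero[OF fA(2)] by (simp add: kap_def)
      then show ?thesis by simp
    qed
    then show ?thesis using R0 by (simp add: lam_def kap_def)
  next
    case False
    have "lam \<ge> 0" "kap \<ge> 0" by (simp_all add: lam_def kap_def sum_nonneg)
    with False have lpos: "lam > 0" and kpos': "kap > 0" by auto
    define e where "e p = min (Suc p) P" for p
    define L where "L = (\<lambda>p r. if p < P then min (y r) (lam/2^p) - min (y r) (lam/2^Suc p) else min (y r) (lam/2^P))"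
    define M where "M = (\<lambda>p r. if p < P then min (w r) (kap/2^p) - min (w r) (kap/2^Suc p) else min (w r) (kap/2^P))"
    note LA = layers[where y=y and A=A and lam=lam and K=k and P=P, OF fA(1) y lam_def lpos AB(4) P_k, folded L_def]
    note MB = layers[where y=w and A=B and lam=kap and K=k and P=P, OF fA(2) w kap_def kpos' AB(5) P_k, folded M_def]
    define T where "T p q = (\<Sum>r\<in>A. \<Sum>s\<in>B. of_real (L p r) * of_real (M q s) * G r s)" for p q
    have expand: "(\<Sum>r\<in>A. \<Sum>s\<in>B. of_real (y r) * of_real (w s) * G r s) = (\<Sum>p\<le>P. \<Sum>q\<le>P. T p q)"
    proof -
      have "(\<Sum>r\<in>A. \<Sum>s\<in>B. of_real (y r) * of_real (w s) * G r s)
          = (\<Sum>r\<in>A. \<Sum>s\<in>B. (\<Sum>p\<le>P. of_real (L p r)) * (\<Sum>q\<le>P. of_real (M q s)) * G r s)"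
        by (intro sum.cong refl) (simp add: LA(1) MB(1) L_def M_def)
      also have "\<dots> = (\<Sum>r\<in>A. \<Sum>s\<in>B. \<Sum>p\<le>P. \<Sum>q\<le>P. of_real (L p r) * of_real (M q s) * G r s)"
        by (simp add: sum_distrib_left sum_distrib_right mult_ac) (intro sum.cong refl sum.swap)
      also have "\<dots> = (\<Sum>r\<in>A. \<Sum>p\<le>P. \<Sum>s\<in>B. \<Sum>q\<le>P. of_real (L p r) * of_real (M q s) * G r s)"
        by (intro sum.cong refl sum.swap)
      also have "\<dots> = (\<Sum>p\<le>P. \<Sum>r\<in>A. \<Sum>s\<in>B. \<Sum>q\<le>P. of_real (L p r) * of_real (M q s) * G r s)"
        by (rule sum.swap)
      also have "\<dots> = (\<Sum>p\<le>P. \<Sum>r\<in>A. \<Sum>q\<le>P. \<Sum>s\<in>B. of_real (L p r) * of_real (M q s) * G r s)"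
        by (intro sum.cong refl sum.swap)
      also have "\<dots> = (\<Sum>p\<le>P. \<Sum>q\<le>P. T p q)"
        unfolding T_def by (intro sum.cong refl sum.swap)
      finally show ?thesis .
    qed
    have Tb: "cmod (T p q) \<le> lam * kap * H (e p + e q)" if "p \<le> P" "q \<le> P" for p q
    proof -
      have la3: "real (card {r\<in>A. L p r \<noteq> 0}) \<le> 4^(e p)"
        using LA(3)[of p] that(1) by (simp add: L_def e_def)
      have mb3: "real (card {s\<in>B. M q s \<noteq> 0}) \<le> 4^(e q)"
        using MB(3)[of q] that(2) by (simp add: M_def e_def)
      have "cmod (T p q) \<le> (lam/2^(e p)) * (kap/2^(e q)) * min (\<delta> * real k)
              (real (card {r\<in>A. L p r \<noteq> 0}) * real (card {s\<in>B. M q s \<noteq> 0}) / real k)"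
        unfolding T_def by (rule vertex2[OF AB]) (use LA(2) MB(2) lpos kpos' in \<open>auto simp: e_def L_def M_def\<close>)
      also have "\<dots> \<le> lam * kap * min (\<delta> * real k / 2^(e p + e q)) (1 / real k * 2^(e p + e q))"
        by (rule hbound) (use lpos kpos' dge kpos la3 mb3 in auto)
      finally show ?thesis by (simp add: H_def)
    qed
    have "cmod (\<Sum>p\<le>P. \<Sum>q\<le>P. T p q) \<le> (\<Sum>p\<le>P. \<Sum>q\<le>P. cmod (T p q))"
      by (rule order_trans[OF norm_sum sum_mono]) (rule norm_sum)
    also have "\<dots> \<le> (\<Sum>p\<le>P. \<Sum>q\<le>P. lam * kap * H (e p + e q))"
      by (intro sum_mono Tb) auto
    also have "\<dots> = lam * kap * (\<Sum>p\<le>P. \<Sum>q\<le>P. H (e p + e q))"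
      by (simp add: sum_distrib_left)
    also have "\<dots> \<le> lam * kap * ((3 * real P + 7) * sqrt \<delta>)"
      using num lpos kpos' by (intro mult_left_mono) (auto simp: e_def)
    finally show ?thesis using expand by (simp add: lam_def kap_def mult_ac)
  qed
qed

end

lemma cs_sum:
  fixes t :: "nat \<Rightarrow> real"
  assumes "finite I"
  shows "(\<Sum>i\<in>I. t i)^2 \<le> real (card I) * (\<Sum>i\<in>I. (t i)^2)"
proof -
  have "0 \<le> (\<Sum>i\<in>I. \<Sum>j\<in>I. (t i - t j)^2)" by (intro sum_nonneg) auto
  also have "\<dots> = (\<Sum>i\<in>I. \<Sum>j\<in>I. (t i)^2 + (t j)^2 - 2 * (t i * t j))"
    by (intro sum.cong refl) (simp add: power2_diff)
  also have "\<dots> = 2 * (real (card I) * (\<Sum>i\<in>I. (t i)^2)) - 2 * (\<Sum>i\<in>I. t i)^2"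
    by (simp add: sum.distrib sum_subtractf sum_distrib_left sum_distrib_right power2_eq_square[of "sum t I"]
        sum.swap[of "\<lambda>i j. (t j)^2"] algebra_simps)
  finally show ?thesis by simp
qed

lemma sum_le_sqrt:
  fixes t :: "nat \<Rightarrow> real"
  assumes "finite I" "\<And>i. i \<in> I \<Longrightarrow> 0 \<le> t i"
  shows "(\<Sum>i\<in>I. t i) \<le> sqrt (real (card I)) * sqrt (\<Sum>i\<in>I. (t i)^2)"
proof -
  have "(\<Sum>i\<in>I. t i) \<le> sqrt (real (card I) * (\<Sum>i\<in>I. (t i)^2))"
    by (rule real_le_rsqrt) (rule cs_sum[OF assms(1)])
  then show ?thesis by (simp add: real_sqrt_mult)
qed

definition om :: "nat \<Rightarrow> complex" where
  "om a = (if a = 0 then 1 else if a = 1 then -1 else if a = 2 then \<i> else - \<i>)"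

definition cpart :: "nat \<Rightarrow> complex \<Rightarrow> real" where
  "cpart a c = (if a = 0 then max (Re c) 0 else if a = 1 then max (- Re c) 0
     else if a = 2 then max (Im c) 0 else max (- Im c) 0)"

lemma four_sum: "(\<Sum>a<4. (f::nat \<Rightarrow> 'a :: comm_monoid_add) a) = f 0 + f 1 + f 2 + f 3"
  by (simp add: eval_nat_numeral add_ac)

lemma dec: "c = (\<Sum>a<4. om a * of_real (cpart a c))"
  by (simp add: four_sum om_def cpart_def complex_eq_iff max_def)

lemma part_nonneg: "0 \<le> cpart a c"
  by (simp add: cpart_def)

lemma part_sq: "(\<Sum>a<4. (cpart a c)^2) = (cmod c)^2"
  by (simp add: four_sum cpart_def max_def cmod_power2)

lemma om_norm: "cmod (om a) = 1"
  by (simp add: om_def)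

lemma count_sets:
  assumes fin: "finite A" and rs: "r \<in> A" "s \<in> A" "r \<noteq> s"
  shows "card {S\<in>Pow A. r \<in> S \<and> s \<notin> S} = 2^(card A - 2)"
proof -
  have eq: "{S\<in>Pow A. r \<in> S \<and> s \<notin> S} = insert r ` Pow (A - {r, s})"
  proof
    show "{S\<in>Pow A. r \<in> S \<and> s \<notin> S} \<subseteq> insert r ` Pow (A - {r, s})"
    proof
      fix S assume "S \<in> {S\<in>Pow A. r \<in> S \<and> s \<notin> S}"
      then have S: "S \<subseteq> A" "r \<in> S" "s \<notin> S" by auto
      then have "S = insert r (S - {r})" "S - {r} \<in> Pow (A - {r, s})" by auto
      then show "S \<in> insert r ` Pow (A - {r, s})" by blast
    qed
    show "insert r ` Pow (A - {r, s}) \<subseteq> {S\<in>Pow A. r \<in> S \<and> s \<notin> S}" using rs by auto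
  qed
  have inj: "inj_on (insert r) (Pow (A - {r, s}))"
    by (rule inj_onI) (metis Diff_iff Pow_iff insertI1 insert_Diff_single insert_absorb subsetD Diff_insert_absorb)
  have "card {S\<in>Pow A. r \<in> S \<and> s \<notin> S} = card (Pow (A - {r, s}))"
    unfolding eq by (rule card_image[OF inj])
  also have "\<dots> = 2^card (A - {r, s})" using fin by (simp add: card_Pow)
  also have "card (A - {r, s}) = card A - 2" using fin rs by (simp add: card_Diff_subset)
  finally show ?thesis .
qed

definition nrm :: "nat set \<Rightarrow> (nat \<Rightarrow> complex) \<Rightarrow> real" where
  "nrm A x = sqrt (\<Sum>r\<in>A. (cmod (x r))^2)"

lemma parts_norm:
  assumes "finite A"
  shows "(\<Sum>a<4. sqrt (\<Sum>r\<in>A. (cpart a (x r))^2)) \<le> 2 * nrm A x"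
proof -
  have "(\<Sum>a<4. sqrt (\<Sum>r\<in>A. (cpart a (x r))^2))
      \<le> sqrt (real (card {..<4::nat})) * sqrt (\<Sum>a<4. (sqrt (\<Sum>r\<in>A. (cpart a (x r))^2))^2)"
    by (rule sum_le_sqrt) (auto intro: sum_nonneg)
  also have "(\<Sum>a<4::nat. (sqrt (\<Sum>r\<in>A. (cpart a (x r))^2))^2) = (\<Sum>a<4. \<Sum>r\<in>A. (cpart a (x r))^2)"
    by (intro sum.cong refl) (simp add: sum_nonneg)
  also have "\<dots> = (\<Sum>r\<in>A. \<Sum>a<4. (cpart a (x r))^2)" by (rule sum.swap)
  also have "\<dots> = (\<Sum>r\<in>A. (cmod (x r))^2)" by (simp add: part_sq)
  also have "sqrt (real (card {..<4::nat})) = 2" by simp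
  finally show ?thesis by (simp add: nrm_def)
qed

context ctx begin

lemma cross:
  assumes AB: "A \<subseteq> {1..N}" "B \<subseteq> {1..N}" "A \<inter> B = {}" "card A \<le> k" "card B \<le> k"
  shows "cmod (\<Sum>r\<in>A. \<Sum>s\<in>B. x r * cnj (z s) * G r s) \<le> 4 * ((3 * real P + 7) * sqrt \<delta>) * nrm A x * nrm B z"
proof -
  have fA: "finite A" "finite B" using AB(1,2) by (auto intro: finite_subset)
  define Cp where "Cp = (3 * real P + 7) * sqrt \<delta>"
  have Cp0: "Cp \<ge> 0" using dge by (simp add: Cp_def)
  define T where "T a b = (\<Sum>r\<in>A. \<Sum>s\<in>B. of_real (cpart a (x r)) * of_real (cpart b (z s)) * G r s)" for a b
  define na where "na a = sqrt (\<Sum>r\<in>A. (cpart a (x r))^2)" for a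
  define nb where "nb b = sqrt (\<Sum>s\<in>B. (cpart b (z s))^2)" for b
  have pw: "x r * cnj (z s) = (\<Sum>a<4. \<Sum>b<4. om a * cnj (om b) * (of_real (cpart a (x r)) * of_real (cpart b (z s))))" for r s
  proof -
    have "x r * cnj (z s) = (\<Sum>a<4. om a * of_real (cpart a (x r))) * cnj (\<Sum>b<4. om b * of_real (cpart b (z s)))"
      using dec[of "x r"] dec[of "z s"] by simp
    also have "\<dots> = (\<Sum>a<4. om a * of_real (cpart a (x r))) * (\<Sum>b<4. cnj (om b) * of_real (cpart b (z s)))"
      by simp
    also have "\<dots> = (\<Sum>a<4. \<Sum>b<4. om a * cnj (om b) * (of_real (cpart a (x r)) * of_real (cpart b (z s))))"
      by (simp add: sum_product mult_ac)
    finally show ?thesis .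
  qed
  have e: "(\<Sum>r\<in>A. \<Sum>s\<in>B. x r * cnj (z s) * G r s) = (\<Sum>a<4. \<Sum>b<4. om a * cnj (om b) * T a b)"
  proof -
    have "(\<Sum>r\<in>A. \<Sum>s\<in>B. x r * cnj (z s) * G r s)
        = (\<Sum>r\<in>A. \<Sum>s\<in>B. \<Sum>a<4. \<Sum>b<4. om a * cnj (om b) * (of_real (cpart a (x r)) * of_real (cpart b (z s)) * G r s))"
      by (simp only: pw sum_distrib_right mult.assoc)
    also have "\<dots> = (\<Sum>r\<in>A. \<Sum>a<4. \<Sum>s\<in>B. \<Sum>b<4. om a * cnj (om b) * (of_real (cpart a (x r)) * of_real (cpart b (z s)) * G r s))"
      by (intro sum.cong refl sum.swap)
    also have "\<dots> = (\<Sum>a<4. \<Sum>r\<in>A. \<Sum>s\<in>B. \<Sum>b<4. om a * cnj (om b) * (of_real (cpart a (x r)) * of_real (cpart b (z s)) * G r s))"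
      by (rule sum.swap)
    also have "\<dots> = (\<Sum>a<4. \<Sum>r\<in>A. \<Sum>b<4. \<Sum>s\<in>B. om a * cnj (om b) * (of_real (cpart a (x r)) * of_real (cpart b (z s)) * G r s))"
      by (intro sum.cong refl sum.swap)
    also have "\<dots> = (\<Sum>a<4. \<Sum>b<4. \<Sum>r\<in>A. \<Sum>s\<in>B. om a * cnj (om b) * (of_real (cpart a (x r)) * of_real (cpart b (z s)) * G r s))"
      by (intro sum.cong refl sum.swap)
    also have "\<dots> = (\<Sum>a<4. \<Sum>b<4. om a * cnj (om b) * T a b)"
      unfolding T_def by (simp add: sum_distrib_left)
    finally show ?thesis .
  qed
  have Tb: "cmod (om a * cnj (om b) * T a b) \<le> Cp * (na a * nb b)" for a b
  proof -
    have "cmod (om a * cnj (om b) * T a b) = cmod (T a b)" by (simp add: norm_mult om_norm)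
    also have "\<dots> \<le> Cp * (na a * nb b)"
      unfolding T_def Cp_def na_def nb_def by (rule core[OF AB]) (auto simp: part_nonneg)
    finally show ?thesis .
  qed
  have "cmod (\<Sum>a<4. \<Sum>b<4. om a * cnj (om b) * T a b) \<le> (\<Sum>a<4. \<Sum>b<4. cmod (om a * cnj (om b) * T a b))"
    by (rule order_trans[OF norm_sum sum_mono]) (rule norm_sum)
  also have "\<dots> \<le> (\<Sum>a<4. \<Sum>b<4. Cp * (na a * nb b))" by (intro sum_mono Tb)
  also have "\<dots> = Cp * ((\<Sum>a<4. na a) * (\<Sum>b<4. nb b))"
    by (simp add: sum_distrib_left sum_distrib_right mult_ac) (rule sum.swap)
  also have "\<dots> \<le> Cp * ((2 * nrm A x) * (2 * nrm B z))"
    using parts_norm[OF fA(1), of x] parts_norm[OF fA(2), of z] Cp0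
    by (intro mult_left_mono mult_mono) (auto simp: na_def nb_def nrm_def intro!: sum_nonneg)
  finally show ?thesis using e by (simp add: Cp_def mult_ac)
qed

end

lemma nrm_sq: "finite A \<Longrightarrow> (nrm A z)^2 = (\<Sum>r\<in>A. (cmod (z r))^2)"
  by (simp add: nrm_def sum_nonneg)

lemma nrm_nonneg: "0 \<le> nrm A z" by (simp add: nrm_def sum_nonneg)

context ctx begin

lemma diag:
  assumes A: "A \<subseteq> {1..N}" "card A \<le> k"
  shows "cmod ((\<Sum>r\<in>A. \<Sum>s\<in>A. z r * cnj (z s) * G r s) - of_real (\<Sum>r\<in>A. (cmod (z r))^2))
     \<le> 8 * ((3 * real P + 7) * sqrt \<delta>) * (nrm A z)^2"
proof -
  have fA: "finite A" using A(1) by (auto intro: finite_subset)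
  define Cp where "Cp = (3 * real P + 7) * sqrt \<delta>"
  have Cp0: "Cp \<ge> 0" using dge by (simp add: Cp_def)
  define T where "T r s = z r * cnj (z s) * G r s" for r s
  define off where "off = (\<Sum>r\<in>A. \<Sum>s\<in>A - {r}. T r s)"
  have offeq: "(\<Sum>r\<in>A. \<Sum>s\<in>A. z r * cnj (z s) * G r s) - of_real (\<Sum>r\<in>A. (cmod (z r))^2) = off"
  proof -
    have "(\<Sum>s\<in>A. T r s) = of_real ((cmod (z r))^2) + (\<Sum>s\<in>A - {r}. T r s)" if "r \<in> A" for r
    proof -
      have "(\<Sum>s\<in>A. T r s) = T r r + (\<Sum>s\<in>A - {r}. T r s)" using fA that by (rule sum.remove)
      moreover have "T r r = of_real ((cmod (z r))^2)"
      proof -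
        have "G r r = 1" using that A(1) G_diag[of r] by auto
        then show ?thesis by (simp add: T_def complex_norm_square[symmetric] del: of_real_power)
      qed
      ultimately show ?thesis by simp
    qed
    then have "(\<Sum>r\<in>A. \<Sum>s\<in>A. T r s) = (\<Sum>r\<in>A. of_real ((cmod (z r))^2)) + off"
      unfolding off_def by (simp add: sum.distrib)
    then show ?thesis by (simp add: T_def)
  qed
  show ?thesis
  proof (cases "card A \<ge> 2")
    case False
    have "off = 0" unfolding off_def
    proof (rule sum.neutral, rule ballI)
      fix r assume r: "r \<in> A"
      have "card A \<le> 1" using False by simp
      then have "A - {r} = {}" using r fA
        by (metis Diff_eq_empty_iff card_1_singletonE card_0_eq empty_iff le_eq_less_or_eq less_one singletonD subsetI)
      then show "(\<Sum>s\<in>A - {r}. T r s) = 0" by (simp only: sum.empty)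
    qed
    then show ?thesis using offeq Cp0 by (simp add: Cp_def[symmetric])
  next
    case True
    define Q where "Q S = (\<Sum>r\<in>S. \<Sum>s\<in>A - S. T r s)" for S
    have avg: "(\<Sum>S\<in>Pow A. Q S) = of_nat (2^(card A - 2)) * off"
    proof -
      have "(\<Sum>S\<in>Pow A. Q S) = (\<Sum>S\<in>Pow A. \<Sum>r\<in>A. \<Sum>s\<in>A. if r \<in> S \<and> s \<notin> S then T r s else 0)"
      proof (rule sum.cong[OF refl])
        fix S assume S: "S \<in> Pow A"
        have "Q S = (\<Sum>r\<in>A. if r \<in> S then (\<Sum>s\<in>A - S. T r s) else 0)"
          unfolding Q_def using sum.inter_restrict[OF fA, of "\<lambda>r. \<Sum>s\<in>A - S. T r s" S] S
          by (simp add: Int_absorb1)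
        also have "\<dots> = (\<Sum>r\<in>A. \<Sum>s\<in>A. if r \<in> S \<and> s \<notin> S then T r s else 0)"
        proof (rule sum.cong[OF refl])
          fix r assume "r \<in> A"
          have "(\<Sum>s\<in>A - S. T r s) = (\<Sum>s\<in>A. if s \<in> - S then T r s else 0)"
            using sum.inter_restrict[OF fA, of "T r" "- S"] by (simp add: Diff_eq)
          then show "(if r \<in> S then (\<Sum>s\<in>A - S. T r s) else 0) = (\<Sum>s\<in>A. if r \<in> S \<and> s \<notin> S then T r s else 0)"
            by (auto intro: sum.cong)
        qed
        finally show "Q S = (\<Sum>r\<in>A. \<Sum>s\<in>A. if r \<in> S \<and> s \<notin> S then T r s else 0)" .
      qed
      also have "\<dots> = (\<Sum>r\<in>A. \<Sum>S\<in>Pow A. \<Sum>s\<in>A. if r \<in> S \<and> s \<notin> S then T r s else 0)"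
        by (rule sum.swap)
      also have "\<dots> = (\<Sum>r\<in>A. \<Sum>s\<in>A. \<Sum>S\<in>Pow A. if r \<in> S \<and> s \<notin> S then T r s else 0)"
        by (intro sum.cong refl sum.swap)
      also have "\<dots> = (\<Sum>r\<in>A. \<Sum>s\<in>A. of_nat (card {S\<in>Pow A. r \<in> S \<and> s \<notin> S}) * T r s)"
      proof (intro sum.cong refl)
        fix r s
        have e1: "(\<Sum>S\<in>Pow A. if r \<in> S \<and> s \<notin> S then T r s else 0) = (\<Sum>S\<in>{S\<in>Pow A. r \<in> S \<and> s \<notin> S}. T r s)"
          using fA by (intro sum.inter_filter[symmetric]) simp
        have e2: "(\<Sum>S\<in>{S\<in>Pow A. r \<in> S \<and> s \<notin> S}. T r s) = of_nat (card {S\<in>Pow A. r \<in> S \<and> s \<notin> S}) * T r s"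
          by (rule sum_constant)
        show "(\<Sum>S\<in>Pow A. if r \<in> S \<and> s \<notin> S then T r s else 0) = of_nat (card {S\<in>Pow A. r \<in> S \<and> s \<notin> S}) * T r s"
          using e1 e2 by (rule trans)
      qed
      also have "\<dots> = (\<Sum>r\<in>A. \<Sum>s\<in>A - {r}. of_nat (2^(card A - 2)) * T r s)"
      proof (rule sum.cong[OF refl])
        fix r assume r: "r \<in> A"
        have "(\<Sum>s\<in>A. of_nat (card {S\<in>Pow A. r \<in> S \<and> s \<notin> S}) * T r s)
            = of_nat (card {S\<in>Pow A. r \<in> S \<and> r \<notin> S}) * T r r + (\<Sum>s\<in>A - {r}. of_nat (card {S\<in>Pow A. r \<in> S \<and> s \<notin> S}) * T r s)"
          using fA r by (rule sum.remove)
        also have "of_nat (card {S\<in>Pow A. r \<in> S \<and> r \<notin> S}) * T r r = 0" by simp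
        also have "(\<Sum>s\<in>A - {r}. of_nat (card {S\<in>Pow A. r \<in> S \<and> s \<notin> S}) * T r s)
            = (\<Sum>s\<in>A - {r}. of_nat (2^(card A - 2)) * T r s)"
          by (rule sum.cong[OF refl]) (use count_sets[OF fA r] in auto)
        finally show "(\<Sum>s\<in>A. of_nat (card {S\<in>Pow A. r \<in> S \<and> s \<notin> S}) * T r s) = (\<Sum>s\<in>A - {r}. of_nat (2^(card A - 2)) * T r s)"
          by simp
      qed
      also have "\<dots> = of_nat (2^(card A - 2)) * off" by (simp add: off_def sum_distrib_left)
      finally show ?thesis .
    qed
    have Qb: "cmod (Q S) \<le> 2 * Cp * (nrm A z)^2" if S: "S \<in> Pow A" for S
    proof -
      have S': "S \<subseteq> A" using S by simp
      have cS: "card S \<le> k" using card_mono[OF fA S'] A(2) by simp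
      have cD: "card (A - S) \<le> k" using card_mono[OF fA, of "A - S"] A(2) by auto
      have "cmod (Q S) \<le> 4 * Cp * nrm S z * nrm (A - S) z"
        unfolding Q_def T_def Cp_def by (rule cross) (use A S' cS cD in auto)
      also have "\<dots> \<le> 2 * Cp * ((nrm S z)^2 + (nrm (A - S) z)^2)"
      proof -
        have "2 * (nrm S z * nrm (A - S) z) \<le> (nrm S z)^2 + (nrm (A - S) z)^2"
          using sum_squares_bound[of "nrm S z" "nrm (A - S) z"] by (simp add: mult.assoc)
        from mult_left_mono[OF this, of "2 * Cp"] Cp0 show ?thesis by (simp add: algebra_simps)
      qed
      also have "(nrm S z)^2 + (nrm (A - S) z)^2 = (nrm A z)^2"
        using fA S' by (simp add: nrm_sq finite_subset sum.subset_diff[of S A])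
      finally show ?thesis .
    qed
    have "cmod (\<Sum>S\<in>Pow A. Q S) \<le> (\<Sum>S\<in>Pow A. cmod (Q S))" by (rule norm_sum)
    also have "\<dots> \<le> (\<Sum>S\<in>Pow A. 2 * Cp * (nrm A z)^2)" by (intro sum_mono Qb)
    also have "\<dots> = 2^(card A) * (2 * Cp * (nrm A z)^2)" using fA by (simp add: card_Pow)
    finally have b1: "cmod (\<Sum>S\<in>Pow A. Q S) \<le> 2^(card A) * (2 * Cp * (nrm A z)^2)" .
    have pw: "(2::real)^(card A) = 4 * 2^(card A - 2)"
    proof -
      have "card A = (card A - 2) + 2" using True by simp
      then have "(2::real)^(card A) = 2^(card A - 2) * 2^2" by (metis power_add)
      then show ?thesis by simp
    qed
    have nm: "cmod (of_nat (2^(card A - 2)) * off) = 2^(card A - 2) * cmod off"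
      by (simp add: norm_mult norm_power)
    have "cmod (of_nat (2^(card A - 2)) * off) \<le> 4 * 2^(card A - 2) * (2 * Cp * (nrm A z)^2)"
      using avg b1 pw by simp
    then have "2^(card A - 2) * cmod off \<le> 2^(card A - 2) * (8 * Cp * (nrm A z)^2)"
      unfolding nm by (simp add: algebra_simps)
    then have "cmod off \<le> 8 * Cp * (nrm A z)^2" by (rule mult_left_le_imp_le) simp
    then show ?thesis using offeq by (simp add: Cp_def)
  qed
qed

end

lemma blocks:
  fixes J :: "nat set" and m k :: nat
  assumes fin: "finite J" and c: "card J \<le> m * k" and kpos: "k > 0"
  shows "\<exists>Jb. (\<forall>i. Jb i \<subseteq> J \<and> card (Jb i) \<le> k) \<and> (\<forall>i j. i \<noteq> j \<longrightarrow> Jb i \<inter> Jb j = {})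
              \<and> (\<Union>i\<in>{..<m}. Jb i) = J"
proof -
  obtain f where f: "bij_betw f {0..<card J} J" using ex_bij_betw_nat_finite[OF fin] by blast
  define Jb where "Jb i = f ` ({i*k..<Suc i * k} \<inter> {0..<card J})" for i
  have 1: "Jb i \<subseteq> J" for i using f by (auto simp: Jb_def bij_betw_def)
  have 2: "card (Jb i) \<le> k" for i
  proof -
    have "card (Jb i) \<le> card ({i*k..<Suc i * k} \<inter> {0..<card J})" unfolding Jb_def by (rule card_image_le) simp
    also have "\<dots> \<le> card {i*k..<Suc i * k}" by (intro card_mono) auto
    finally show ?thesis by simp
  qed
  have dv: "a div k = i" if "a \<in> {i*k..<Suc i * k}" for a i
    using that by (intro div_nat_eqI) (auto simp: mult.commute)
  have 3: "Jb i \<inter> Jb j = {}" if "i \<noteq> j" for i j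
  proof (rule ccontr)
    assume "Jb i \<inter> Jb j \<noteq> {}"
    then obtain a b where a: "a \<in> {i*k..<Suc i * k} \<inter> {0..<card J}" and b: "b \<in> {j*k..<Suc j * k} \<inter> {0..<card J}"
      and e: "f a = f b" unfolding Jb_def by blast
    have "a = b" using f a b e by (auto simp: bij_betw_def inj_on_def)
    then show False using dv[of a i] dv[of b j] a b that by auto
  qed
  have 4: "(\<Union>i\<in>{..<m}. Jb i) = J"
  proof
    show "(\<Union>i\<in>{..<m}. Jb i) \<subseteq> J" using 1 by auto
    show "J \<subseteq> (\<Union>i\<in>{..<m}. Jb i)"
    proof
      fix x assume "x \<in> J"
      moreover have "J = f ` {0..<card J}" using f by (simp add: bij_betw_def)
      ultimately have "x \<in> f ` {0..<card J}" by simp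
      then obtain a where a: "a < card J" "x = f a" by (auto simp: image_iff)
      define i where "i = a div k"
      have "a < m * k" using a c by simp
      then have im: "i < m" using kpos by (simp add: i_def less_mult_imp_div_less)
      have "i * k \<le> a" unfolding i_def by (metis div_mult_mod_eq le_add1)
      moreover have "a < Suc i * k"
      proof -
        have "a = i*k + a mod k" unfolding i_def by simp
        moreover have "a mod k < k" using kpos by simp
        ultimately show ?thesis by simp
      qed
      ultimately have "x \<in> Jb i" using a by (auto simp: Jb_def)
      then show "x \<in> (\<Union>i\<in>{..<m}. Jb i)" using im by auto
    qed
  qed
  show ?thesis using 1 2 3 4 by blast
qed

lemma ln2_bound: "15/22 \<le> ln (2::real)"
proof -
  have "exp (15::real) = (exp 1)^15" by (simp add: exp_of_nat_mult[symmetric])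
  also have "\<dots> \<le> (272/100)^15" using e_less_272 by (intro power_mono) auto
  also have "\<dots> \<le> (2::real)^22" by (simp add: power_divide divide_le_eq)
  finally have "exp 15 \<le> (2::real)^22" .
  then have "15 \<le> ln ((2::real)^22)" by (subst ln_ge_iff) auto
  also have "\<dots> = 22 * ln 2" by (subst ln_realpow) auto
  finally show ?thesis by simp
qed

lemma numeric:
  fixes P k :: nat
  assumes "1024 \<le> k" "4^(P-1) < k"
  shows "9 * real P + 21 \<le> 11 * ln (real k)"
proof -
  have l2: "15/22 \<le> ln (2::real)" by (rule ln2_bound)
  have a: "10 * ln 2 \<le> ln (real k)"
  proof -
    have "ln (1024::real) \<le> ln (real k)" using assms(1) by (subst ln_le_cancel_iff) auto
    moreover have "ln (1024::real) = 10 * ln 2" using ln_realpow[of 2 10] by simp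
    ultimately show ?thesis by simp
  qed
  have b: "real (2 * (P - 1)) * ln 2 \<le> ln (real k)"
  proof -
    have "(4::nat)^(P-1) = 2^(2*(P-1))" by (simp add: power_mult)
    then have "real ((2::nat)^(2*(P-1))) < real k" using assms(2) by (metis of_nat_less_iff)
    then have "(2::real)^(2*(P-1)) \<le> real k" by simp
    then have "ln ((2::real)^(2*(P-1))) \<le> ln (real k)" using assms(1) by (subst ln_le_cancel_iff) auto
    then show ?thesis by (simp add: ln_realpow)
  qed
  show ?thesis
  proof (cases "P \<le> 6")
    case True
    have "10 * (15/22) \<le> 10 * ln (2::real)" using l2 by simp
    then show ?thesis using a True by simp
  next
    case False
    have "real (2 * (P - 1)) * (15/22) \<le> real (2 * (P - 1)) * ln 2" using l2 by (intro mult_left_mono) auto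
    with b have c: "real (2 * (P - 1)) * (15/22) \<le> ln (real k)" by linarith
    have "real (2 * (P - 1)) = 2 * real P - 2" using False by simp
    with c have "(2 * real P - 2) * (15/22) \<le> ln (real k)" by simp
    then show ?thesis using False by simp
  qed
qed

context ctx begin

lemma assembly:
  assumes J: "J \<subseteq> {1..N}" and cJ: "card J \<le> m * k"
  shows "cmod ((\<Sum>r\<in>J. \<Sum>s\<in>J. x r * cnj (x s) * G r s) - of_real (\<Sum>r\<in>J. (cmod (x r))^2))
     \<le> 4 * ((3 * real P + 7) * sqrt \<delta>) * (real m + 1) * (\<Sum>r\<in>J. (cmod (x r))^2)"
proof -
  define Cp where "Cp = (3 * real P + 7) * sqrt \<delta>"
  have Cp0: "Cp \<ge> 0" using dge by (simp add: Cp_def)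
  have fJ: "finite J" using J by (auto intro: finite_subset)
  have k0: "k > 0" using kge by simp
  obtain Jb where Jb1: "\<And>i. Jb i \<subseteq> J" and Jb2: "\<And>i. card (Jb i) \<le> k"
    and Jb3: "\<And>i j. i \<noteq> j \<Longrightarrow> Jb i \<inter> Jb j = {}" and Jb4: "(\<Union>i\<in>{..<m}. Jb i) = J"
    using blocks[OF fJ cJ k0] by blast
  have fJb: "finite (Jb i)" for i using Jb1 fJ by (auto intro: finite_subset)
  have JbN: "Jb i \<subseteq> {1..N}" for i using Jb1 J by auto
  have dec: "(\<Sum>r\<in>J. g r) = (\<Sum>i<m. \<Sum>r\<in>Jb i. g r)" for g :: "nat \<Rightarrow> 'b::comm_monoid_add"
  proof -
    have "(\<Sum>r\<in>J. g r) = (\<Sum>r\<in>(\<Union>i\<in>{..<m}. Jb i). g r)" using Jb4 by simp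
    also have "\<dots> = (\<Sum>i<m. \<Sum>r\<in>Jb i. g r)"
      by (rule sum.UNION_disjoint) (use fJb Jb3 in auto)
    finally show ?thesis .
  qed
  define Q where "Q i j = (\<Sum>r\<in>Jb i. \<Sum>s\<in>Jb j. x r * cnj (x s) * G r s)" for i j
  define nu where "nu i = (\<Sum>r\<in>Jb i. (cmod (x r))^2)" for i
  define v where "v i = nrm (Jb i) x" for i
  have vsq: "(v i)^2 = nu i" for i by (simp add: v_def nu_def nrm_sq[OF fJb])
  have v0: "v i \<ge> 0" for i by (simp add: v_def nrm_nonneg)
  have e1: "(\<Sum>r\<in>J. \<Sum>s\<in>J. x r * cnj (x s) * G r s) = (\<Sum>i<m. \<Sum>j<m. Q i j)"
  proof -
    have "(\<Sum>r\<in>J. \<Sum>s\<in>J. x r * cnj (x s) * G r s) = (\<Sum>i<m. \<Sum>r\<in>Jb i. \<Sum>j<m. \<Sum>s\<in>Jb j. x r * cnj (x s) * G r s)"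
      by (simp add: dec)
    also have "\<dots> = (\<Sum>i<m. \<Sum>j<m. Q i j)" unfolding Q_def by (intro sum.cong refl sum.swap)
    finally show ?thesis .
  qed
  have e2: "(\<Sum>r\<in>J. (cmod (x r))^2) = (\<Sum>i<m. nu i)" by (simp add: dec nu_def)
  have e3: "(\<Sum>i<m. \<Sum>j<m. Q i j) - of_real (\<Sum>i<m. nu i)
      = (\<Sum>i<m. \<Sum>j<m. Q i j - (if i = j then of_real (nu i) else 0))"
    by (simp add: sum_subtractf)
  have bnd: "cmod (Q i j - (if i = j then of_real (nu i) else 0)) \<le> 4 * Cp * (v i * v j) + (if i = j then 4 * Cp * nu i else 0)" for i j
  proof (cases "i = j")
    case True
    have "cmod (Q i i - of_real (nu i)) \<le> 8 * Cp * (v i)^2"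
      unfolding Q_def nu_def v_def Cp_def by (rule diag) (use JbN Jb2 in auto)
    moreover have "8 * Cp * (v i)^2 = 4 * Cp * (v i * v i) + 4 * Cp * nu i"
      using vsq[of i] by (simp add: power2_eq_square algebra_simps)
    ultimately show ?thesis using True by simp
  next
    case False
    have "cmod (Q i j) \<le> 4 * Cp * v i * v j"
      unfolding Q_def v_def Cp_def by (rule cross) (use JbN Jb2 Jb3[OF False] in auto)
    then show ?thesis using False by (simp add: mult.assoc)
  qed
  have "cmod (\<Sum>i<m. \<Sum>j<m. Q i j - (if i = j then of_real (nu i) else 0))
      \<le> (\<Sum>i<m. \<Sum>j<m. cmod (Q i j - (if i = j then of_real (nu i) else 0)))"
    by (rule order_trans[OF norm_sum sum_mono]) (rule norm_sum)
  also have "\<dots> \<le> (\<Sum>i<m. \<Sum>j<m. 4 * Cp * (v i * v j) + (if i = j then 4 * Cp * nu i else 0))"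
    by (intro sum_mono bnd)
  also have "\<dots> = 4 * Cp * ((\<Sum>i<m. v i) * (\<Sum>j<m. v j)) + 4 * Cp * (\<Sum>i<m. nu i)"
    by (simp add: sum.distrib sum_distrib_left sum_distrib_right mult_ac)
  also have "\<dots> \<le> 4 * Cp * (real m * (\<Sum>i<m. nu i)) + 4 * Cp * (\<Sum>i<m. nu i)"
  proof -
    have "(\<Sum>i<m. v i) * (\<Sum>j<m. v j) = (\<Sum>i<m. v i)^2" by (simp add: power2_eq_square)
    also have "\<dots> \<le> real (card {..<m}) * (\<Sum>i<m. (v i)^2)" by (rule cs_sum) simp
    also have "\<dots> = real m * (\<Sum>i<m. nu i)" by (simp add: vsq)
    finally show ?thesis using Cp0 by (intro add_right_mono mult_left_mono) auto
  qed
  also have "\<dots> = 4 * Cp * (real m + 1) * (\<Sum>i<m. nu i)" by (simp add: algebra_simps)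
  finally show ?thesis using e1 e2 e3 by (simp add: Cp_def)
qed

end

context ctx begin

lemma rip:
  assumes s: "s > 0"
  shows "RIP n N u (2 * s * k) (44 * real s * sqrt \<delta> * ln (real k))"
  unfolding RIP_def
proof (intro allI impI)
  fix x :: "nat \<Rightarrow> complex"
  assume sp: "sparse N (2 * s * k) x"
  define J where "J = {j\<in>{1..N}. x j \<noteq> 0}"
  have JN: "J \<subseteq> {1..N}" by (auto simp: J_def)
  have fJ: "finite J" by (simp add: J_def)
  have cJ: "card J \<le> (2 * s) * k" using sp by (simp add: sparse_def J_def)
  define X where "X = (\<Sum>r\<in>J. (cmod (x r))^2)"
  have X0: "X \<ge> 0" by (simp add: X_def sum_nonneg)
  have nx: "(cnorm2 N (\<lambda>j. x (j + 1)))^2 = X"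
  proof -
    have "(cnorm2 N (\<lambda>j. x (j + 1)))^2 = (\<Sum>j<N. (cmod (x (Suc j)))^2)"
      by (simp add: cnorm2_def sum_nonneg)
    also have "\<dots> = (\<Sum>j\<in>{Suc 0..N}. (cmod (x j))^2)"
      by (rule sum.atLeast1_atMost_eq[symmetric])
    also have "\<dots> = X" unfolding X_def
    proof (rule sum.mono_neutral_right)
      show "finite {Suc 0..N}" by simp
      show "J \<subseteq> {Suc 0..N}" using JN by simp
      show "\<forall>i\<in>{Suc 0..N} - J. (cmod (x i))^2 = 0"
      proof
        fix i assume i: "i \<in> {Suc 0..N} - J"
        then have "x i = 0" unfolding J_def by auto
        then show "(cmod (x i))^2 = 0" by simp
      qed
    qed
    finally show ?thesis .
  qed
  define v where "v = matvec N u x"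
  have v: "v = (\<lambda>i. \<Sum>j\<in>J. x j * u j i)"
  proof
    fix i
    have "(\<Sum>j\<in>{1..N}. x j * u j i) = (\<Sum>j\<in>J. x j * u j i)"
    proof (rule sum.mono_neutral_right)
      show "finite {1..N}" by simp
      show "J \<subseteq> {1..N}" using JN by simp
      show "\<forall>j\<in>{1..N} - J. x j * u j i = 0"
      proof
        fix j assume "j \<in> {1..N} - J"
        then have "x j = 0" unfolding J_def by auto
        then show "x j * u j i = 0" by simp
      qed
    qed
    then show "v i = (\<Sum>j\<in>J. x j * u j i)" unfolding v_def matvec_def .
  qed
  define Qx where "Qx = (\<Sum>r\<in>J. \<Sum>s\<in>J. x r * cnj (x s) * G r s)"
  have nphi: "(cnorm2 n v)^2 = Re Qx"
  proof -
    have "(cnorm2 n v)^2 = (\<Sum>i<n. (cmod (v i))^2)" by (simp add: cnorm2_def sum_nonneg)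
    also have "\<dots> = Re (cinner n v v)"
      unfolding cinner_def by (simp add: complex_norm_square[symmetric] del: of_real_power)
    also have "cinner n v v = Qx" unfolding v Qx_def by (rule bil[OF fJ fJ])
    finally show ?thesis .
  qed
  have as: "cmod (Qx - of_real X) \<le> 4 * ((3 * real P + 7) * sqrt \<delta>) * (real (2 * s) + 1) * X"
    unfolding Qx_def X_def by (rule assembly[OF JN cJ])
  have re: "\<bar>Re Qx - X\<bar> \<le> cmod (Qx - of_real X)"
    using abs_Re_le_cmod[of "Qx - of_real X"] by simp
  have num2: "9 * real P + 21 \<le> 11 * ln (real k)"
    by (rule numeric) (use kge P_lt in auto)
  have c1: "4 * ((3 * real P + 7) * sqrt \<delta>) * (real (2 * s) + 1) \<le> 44 * real s * sqrt \<delta> * ln (real k)"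
  proof -
    have s1: "real (2 * s) + 1 \<le> 3 * real s" using s by simp
    have "4 * ((3 * real P + 7) * sqrt \<delta>) * (real (2 * s) + 1) \<le> 4 * ((3 * real P + 7) * sqrt \<delta>) * (3 * real s)"
      using s1 dge by (intro mult_left_mono) auto
    also have "\<dots> = (12 * (3 * real P + 7)) * (real s * sqrt \<delta>)" by (simp add: algebra_simps)
    also have "\<dots> \<le> (44 * ln (real k)) * (real s * sqrt \<delta>)"
      using num2 dge by (intro mult_right_mono) auto
    also have "\<dots> = 44 * real s * sqrt \<delta> * ln (real k)" by (simp add: algebra_simps)
    finally show ?thesis .
  qed
  have main: "\<bar>(cnorm2 n v)^2 - X\<bar> \<le> 44 * real s * sqrt \<delta> * ln (real k) * X"
    using re as mult_right_mono[OF c1 X0] nphi by linarith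
  show "(1 - 44 * real s * sqrt \<delta> * ln (real k)) * (cnorm2 N (\<lambda>j. x (j + 1)))\<^sup>2 \<le> (cnorm2 n (matvec N u x))\<^sup>2 \<and>
        (cnorm2 n (matvec N u x))\<^sup>2 \<le> (1 + 44 * real s * sqrt \<delta> * ln (real k)) * (cnorm2 N (\<lambda>j. x (j + 1)))\<^sup>2"
    using main unfolding nx v_def[symmetric] by (simp add: algebra_simps abs_le_iff)
qed

end

theorem lemma1:
  fixes n N k s :: nat and u :: "nat \<Rightarrow> nat \<Rightarrow> complex" and \<delta> :: real
  assumes "k \<ge> 2 ^ 10"
    and "s > 0"
    and "\<forall>j\<in>{1..N}. cnorm2 n (u j) = 1"
    and "coherence n N u \<le> 1 / real k"
    and "\<delta> \<ge> 0"
    and "\<forall>J1 J2. J1 \<subseteq> {1..N} \<longrightarrow> J2 \<subseteq> {1..N} \<longrightarrow> J1 \<inter> J2 = {} \<longrightarrow>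
           card J1 \<le> k \<longrightarrow> card J2 \<le> k \<longrightarrow>
           cmod (cinner n (\<lambda>i. \<Sum>j\<in>J1. u j i) (\<lambda>i. \<Sum>j\<in>J2. u j i)) \<le> \<delta> * real k"
  shows "RIP n N u (2 * s * k) (44 * real s * sqrt \<delta> * ln (real k))"
proof -
  interpret ctx n N k u \<delta> by (unfold_locales) (use assms in auto)
  show ?thesis by (rule rip) (rule assms(2))
qed

end
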